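(* Let $\alpha>-1$ and let $\phi(w)=aw+b$ with $a>0$ and $\mathrm{Re}(b)\ge 0$. Then $C_\phi$ is not Li-Yorke chaotic on $\mathcal{A}^2_\alpha(\mathbb{C}_+)$.
   Context: $\mathbb{C}_+=\{z\in\mathbb{C}:\mathrm{Re}(z)>0\}$. For $\alpha>-1$, $\mathcal{A}^2_\alpha(\mathbb{C}_+)$ is the Hilbert space of analytic $f:\mathbb{C}_+\to\mathbb{C}$ with $\|f\|^2=\frac{1}{\pi}\int_{-\infty}^{\infty}\int_0^\infty |f(x+iy)|^2x^\alpha\,dx\,dy<\infty$. $C_\phi f=f\circ\phi$ is the (bounded) composition operator. A bounded operator $T$ on a Banach space $X$ is Li-Yorke chaotic if there exists $x\in X$ with $\liminf_{n\to\infty}\|T^nx\|=0$ and $\limsup_{n\to\infty}\|T^nx\|=\infty$. *)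

theory Defs
  imports "HOL-Complex_Analysis.Complex_Analysis" "HOL-Library.Liminf_Limsup"
begin

definition right_half_plane :: "complex set" where
  "right_half_plane = {z. Re z > 0}"

definition bergman_norm_sq :: "real \<Rightarrow> (complex \<Rightarrow> complex) \<Rightarrow> ennreal" where
  "bergman_norm_sq \<alpha> f =
     ennreal (1 / pi) * (\<integral>\<^sup>+ z. ennreal ((cmod (f z))\<^sup>2 * (Re z) powr \<alpha>)
                          * indicator right_half_plane z \<partial>lborel)"

definition bergman_space :: "real \<Rightarrow> (complex \<Rightarrow> complex) set" where
  "bergman_space \<alpha> = {f. f holomorphic_on right_half_plane \<and> bergman_norm_sq \<alpha> f < \<infinity>}"

definition bergman_norm :: "real \<Rightarrow> (complex \<Rightarrow> complex) \<Rightarrow> real" where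
  "bergman_norm \<alpha> f = sqrt (enn2real (bergman_norm_sq \<alpha> f))"

definition comp_op :: "(complex \<Rightarrow> complex) \<Rightarrow> (complex \<Rightarrow> complex) \<Rightarrow> (complex \<Rightarrow> complex)" where
  "comp_op \<phi> f = f \<circ> \<phi>"

definition li_yorke_chaotic :: "'a set \<Rightarrow> ('a \<Rightarrow> real) \<Rightarrow> ('a \<Rightarrow> 'a) \<Rightarrow> bool" where
  "li_yorke_chaotic X N T \<longleftrightarrow>
     (\<exists>x\<in>X. liminf (\<lambda>n. ereal (N ((T ^^ n) x))) = 0 \<and>
            limsup (\<lambda>n. ereal (N ((T ^^ n) x))) = \<infinity>)"

end

theory Submission
  imports Defs
begin

lemma cos_ge_1_minus_sq: fixes y :: real assumes "y \<ge> 0" shows "cos y \<ge> 1 - y^2/2"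
proof -
  let ?f = "\<lambda>x. cos x - 1 + x^2/2"
  have "\<And>u. \<lbrakk>0 \<le> u; u \<le> y\<rbrakk> \<Longrightarrow> (?f has_real_derivative (u - sin u)) (at u)"
    by (auto intro!: derivative_eq_intros simp: field_simps)
  then have "?f y \<ge> ?f 0"
    by (intro DERIV_nonneg_imp_nondecreasing [OF assms]) (metis diff_ge_0_iff_ge sin_x_le_x)
  then show ?thesis by simp
qed

lemma sin_ge_cubic: fixes y :: real assumes "y \<ge> 0" shows "sin y \<ge> y - y^3/6"
proof -
  let ?f = "\<lambda>x. sin x - x + x^3/6"
  have "\<And>u. \<lbrakk>0 \<le> u; u \<le> y\<rbrakk> \<Longrightarrow> (?f has_real_derivative (cos u - 1 + u^2/2)) (at u)"
    by (auto intro!: derivative_eq_intros simp: field_simps)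
  then have "?f y \<ge> ?f 0"
    using cos_ge_1_minus_sq by (intro DERIV_nonneg_imp_nondecreasing [OF assms]) force
  then show ?thesis by simp
qed

lemma sin_ge_half: fixes y :: real assumes "0 \<le> y" "y \<le> pi/2" shows "sin y \<ge> y/2"
proof -
  have "pi \<le> 3.2" using pi_approx by simp
  hence "y \<le> 1.6" using assms by linarith
  hence "y*y \<le> 1.6*1.6" using assms by (intro mult_mono) auto
  hence "y^2 \<le> 3" by (simp add: power2_eq_square)
  have "y * y^2 \<le> y * 3" using \<open>y^2 \<le> 3\<close> assms by (intro mult_left_mono) auto
  hence "y^3/6 \<le> y/2" by (simp add: power2_eq_square power3_eq_cube)
  thus ?thesis using sin_ge_cubic[OF assms(1)] by linarith
qed

definition dq :: "real \<Rightarrow> real" where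
  "dq t = (if t \<le> 1/2 then \<bar>t - 1/4\<bar> else \<bar>t - 3/4\<bar>)"

lemma abs_sin_eq: fixes x :: real assumes "\<bar>x\<bar> \<le> pi" shows "\<bar>sin x\<bar> = sin \<bar>x\<bar>"
proof (cases "x \<ge> 0")
  case True then show ?thesis using sin_ge_zero[of x] assms by auto
next
  case False then show ?thesis using sin_ge_zero[of "-x"] assms by auto
qed

lemma cos_ge_dq: fixes t :: real assumes "0 \<le> t" "t \<le> 1" shows "\<bar>cos (2*pi*t)\<bar> \<ge> dq t"
proof -
  have c: "cos (2*pi*t) = sin (2*pi*(1/4 - t))" by (simp add: cos_sin_eq algebra_simps)
  show ?thesis
  proof (cases "t \<le> 1/2")
    case True
    have "\<bar>2*pi*(1/4 - t)\<bar> \<le> pi/2" using True assms pi_gt_zero by (auto simp: abs_if algebra_simps)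
    hence "\<bar>cos (2*pi*t)\<bar> = sin \<bar>2*pi*(1/4 - t)\<bar>" unfolding c using abs_sin_eq by auto
    also have "\<dots> \<ge> \<bar>2*pi*(1/4 - t)\<bar>/2" using sin_ge_half \<open>\<bar>2*pi*(1/4 - t)\<bar> \<le> pi/2\<close> by auto
    finally have "\<bar>cos (2*pi*t)\<bar> \<ge> pi * \<bar>t - 1/4\<bar>" by (simp add: abs_mult abs_minus_commute)
    moreover have "1 * \<bar>t - 1/4\<bar> \<le> pi * \<bar>t - 1/4\<bar>" by (rule mult_right_mono) (use pi_gt3 in auto)
    ultimately show ?thesis using True by (simp add: dq_def)
  next
    case False
    have c2: "cos (2*pi*t) = - sin (2*pi*(3/4 - t))"
      using c sin_periodic_pi[of "2*pi*(1/4 - t)"] by (simp add: algebra_simps)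
    have "\<bar>2*pi*(3/4 - t)\<bar> \<le> pi/2" using False assms pi_gt_zero by (auto simp: abs_if algebra_simps)
    hence "\<bar>cos (2*pi*t)\<bar> = sin \<bar>2*pi*(3/4 - t)\<bar>" unfolding c2 using abs_sin_eq by auto
    also have "\<dots> \<ge> \<bar>2*pi*(3/4 - t)\<bar>/2" using sin_ge_half \<open>\<bar>2*pi*(3/4 - t)\<bar> \<le> pi/2\<close> by auto
    finally have "\<bar>cos (2*pi*t)\<bar> \<ge> pi * \<bar>t - 3/4\<bar>" by (simp add: abs_mult abs_minus_commute)
    moreover have "1 * \<bar>t - 3/4\<bar> \<le> pi * \<bar>t - 3/4\<bar>" by (rule mult_right_mono) (use pi_gt3 in auto)
    ultimately show ?thesis using False by (simp add: dq_def)
  qed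
qed

lemma nn_powr_0L:
  fixes \<alpha> L :: real assumes "\<alpha> > -1" "L \<ge> 0"
  shows "(\<integral>\<^sup>+s. ennreal (s powr \<alpha>) * indicator {0..L} s \<partial>lborel) = ennreal (L powr (\<alpha>+1)/(\<alpha>+1))"
  by (rule nn_integral_has_integral_lebesgue'[OF _ has_integral_powr_from_0[OF assms]]) simp

lemma nn_powr_interval:
  fixes \<alpha> L a :: real assumes "\<alpha> > -1" "\<alpha> \<le> 0" "L \<ge> 0"
  shows "(\<integral>\<^sup>+s. ennreal (s powr \<alpha>) * indicator {0<..} s * indicator {a..a+L} s \<partial>lborel)
      \<le> ennreal (L powr (\<alpha>+1)/(\<alpha>+1))"
proof (cases "a \<ge> 0")
  case True
  have "(\<integral>\<^sup>+s. ennreal (s powr \<alpha>) * indicator {0<..} s * indicator {a..a+L} s \<partial>lborel)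
      = (\<integral>\<^sup>+s. ennreal ((a + 1 * s) powr \<alpha>) * indicator {0<..} (a + 1 * s) * indicator {a..a+L} (a + 1 * s) \<partial>lborel)"
    by (subst nn_integral_real_affine[where c=1 and t=a]) auto
  also have "\<dots> \<le> (\<integral>\<^sup>+s. ennreal (s powr \<alpha>) * indicator {0..L} s \<partial>lborel)"
  proof (rule nn_integral_mono_AE)
    show "AE s in lborel. ennreal ((a + 1 * s) powr \<alpha>) * indicator {0<..} (a + 1 * s) * indicator {a..a+L} (a + 1 * s)
       \<le> ennreal (s powr \<alpha>) * indicator {0..L} s"
      using AE_lborel_singleton[of 0]
    proof eventually_elim
      case (elim s)
      show ?case
      proof (cases "s \<in> {0..L}")
        case True
        hence "s > 0" using elim by auto
        hence "(a + s) powr \<alpha> \<le> s powr \<alpha>" using powr_mono2'[of \<alpha> s "a+s"] assms \<open>a \<ge> 0\<close> by auto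
        thus ?thesis using True by (auto simp: indicator_def)
      next
        case False
        thus ?thesis by (auto simp: indicator_def)
      qed
    qed
  qed
  also have "\<dots> = ennreal (L powr (\<alpha>+1)/(\<alpha>+1))" using nn_powr_0L assms by auto
  finally show ?thesis .
next
  case False
  have "(\<integral>\<^sup>+s. ennreal (s powr \<alpha>) * indicator {0<..} s * indicator {a..a+L} s \<partial>lborel)
     \<le> (\<integral>\<^sup>+s. ennreal (s powr \<alpha>) * indicator {0..L} s \<partial>lborel)"
    using False by (intro nn_integral_mono) (auto simp: indicator_def)
  also have "\<dots> = ennreal (L powr (\<alpha>+1)/(\<alpha>+1))" using nn_powr_0L assms by auto
  finally show ?thesis .
qed

lemma nn_abs_powr_sym:
  fixes \<alpha> m :: real assumes "\<alpha> > -1"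
  shows "(\<integral>\<^sup>+s. ennreal (\<bar>s - m\<bar> powr \<alpha>) * indicator {m-1..m+1} s \<partial>lborel) = ennreal (2/(\<alpha>+1))"
proof -
  have split: "ennreal (\<bar>s - m\<bar> powr \<alpha>) * indicator {m-1..m+1} s =
     ennreal ((s - m) powr \<alpha>) * indicator {m..m+1} s + ennreal ((m - s) powr \<alpha>) * indicator {m-1..<m} s" for s
    by (auto simp: indicator_def abs_if)
  have 1: "(\<integral>\<^sup>+s. ennreal ((s - m) powr \<alpha>) * indicator {m..m+1} s \<partial>lborel) = ennreal (1/(\<alpha>+1))"
  proof -
    have "(\<integral>\<^sup>+s. ennreal ((s - m) powr \<alpha>) * indicator {m..m+1} s \<partial>lborel)
       = (\<integral>\<^sup>+s. ennreal ((m + 1 * s - m) powr \<alpha>) * indicator {m..m+1} (m + 1 * s) \<partial>lborel)"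
      by (subst nn_integral_real_affine[where c=1 and t=m]) auto
    also have "\<dots> = (\<integral>\<^sup>+s. ennreal (s powr \<alpha>) * indicator {0..1} s \<partial>lborel)"
      by (intro nn_integral_cong) (auto simp: indicator_def)
    also have "\<dots> = ennreal (1/(\<alpha>+1))" using nn_powr_0L[of \<alpha> 1] assms by simp
    finally show ?thesis .
  qed
  have 2: "(\<integral>\<^sup>+s. ennreal ((m - s) powr \<alpha>) * indicator {m-1..<m} s \<partial>lborel) = ennreal (1/(\<alpha>+1))"
  proof -
    have "(\<integral>\<^sup>+s. ennreal ((m - s) powr \<alpha>) * indicator {m-1..<m} s \<partial>lborel)
       = (\<integral>\<^sup>+s. ennreal ((m - (m + (-1) * s)) powr \<alpha>) * indicator {m-1..<m} (m + (-1) * s) \<partial>lborel)"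
      by (subst nn_integral_real_affine[where c="-1" and t=m]) auto
    also have "\<dots> = (\<integral>\<^sup>+s. ennreal (s powr \<alpha>) * indicator {0..1} s \<partial>lborel)"
      by (intro nn_integral_cong_AE) (use AE_lborel_singleton[of 0] in \<open>eventually_elim, auto simp: indicator_def\<close>)
    also have "\<dots> = ennreal (1/(\<alpha>+1))" using nn_powr_0L[of \<alpha> 1] assms by simp
    finally show ?thesis .
  qed
  have "(\<integral>\<^sup>+s. ennreal (\<bar>s - m\<bar> powr \<alpha>) * indicator {m-1..m+1} s \<partial>lborel)
     = (\<integral>\<^sup>+s. ennreal ((s - m) powr \<alpha>) * indicator {m..m+1} s \<partial>lborel)
       + (\<integral>\<^sup>+s. ennreal ((m - s) powr \<alpha>) * indicator {m-1..<m} s \<partial>lborel)"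
    unfolding split by (intro nn_integral_add) auto
  also have "\<dots> = ennreal (2/(\<alpha>+1))" unfolding 1 2 using assms
    by (subst ennreal_plus[symmetric]) (auto simp: field_simps)
  finally show ?thesis .
qed

lemma J_bound:
  fixes \<alpha> :: real assumes "\<alpha> > -1" "\<alpha> \<le> 0"
  shows "(\<integral>\<^sup>+t. ennreal (\<bar>cos (2*pi*t)\<bar> powr \<alpha>) * indicator {0..1} t \<partial>lborel) \<le> ennreal (4/(\<alpha>+1))"
proof -
  have "(\<integral>\<^sup>+t. ennreal (\<bar>cos (2*pi*t)\<bar> powr \<alpha>) * indicator {0..1} t \<partial>lborel)
     \<le> (\<integral>\<^sup>+t. ennreal (\<bar>t - 1/4\<bar> powr \<alpha>) * indicator {1/4-1..1/4+1} t
            + ennreal (\<bar>t - 3/4\<bar> powr \<alpha>) * indicator {3/4-1..3/4+1} t \<partial>lborel)"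
  proof (rule nn_integral_mono_AE)
    show "AE t in lborel. ennreal (\<bar>cos (2*pi*t)\<bar> powr \<alpha>) * indicator {0..1} t
      \<le> ennreal (\<bar>t - 1/4\<bar> powr \<alpha>) * indicator {1/4-1..1/4+1} t
            + ennreal (\<bar>t - 3/4\<bar> powr \<alpha>) * indicator {3/4-1..3/4+1} t"
      using AE_lborel_singleton[of "1/4"] AE_lborel_singleton[of "3/4"]
    proof eventually_elim
      case (elim t)
      show ?case
      proof (cases "t \<in> {0..1}")
        case True
        have dpos: "dq t > 0" using elim by (auto simp: dq_def)
        have le: "\<bar>cos (2*pi*t)\<bar> powr \<alpha> \<le> dq t powr \<alpha>"
          using powr_mono2'[OF assms(2) dpos cos_ge_dq[of t]] True by auto
        have "dq t powr \<alpha> \<le> \<bar>t - 1/4\<bar> powr \<alpha> + \<bar>t - 3/4\<bar> powr \<alpha>"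
          by (auto simp: dq_def)
        hence "\<bar>cos (2*pi*t)\<bar> powr \<alpha> \<le> \<bar>t - 1/4\<bar> powr \<alpha> + \<bar>t - 3/4\<bar> powr \<alpha>" using le by linarith
        thus ?thesis using True by (auto simp: indicator_def ennreal_plus[symmetric] simp del: ennreal_plus)
      next
        case False thus ?thesis by (auto simp: indicator_def)
      qed
    qed
  qed
  also have "\<dots> = (\<integral>\<^sup>+t. ennreal (\<bar>t - 1/4\<bar> powr \<alpha>) * indicator {1/4-1..1/4+1} t \<partial>lborel)
      + (\<integral>\<^sup>+t. ennreal (\<bar>t - 3/4\<bar> powr \<alpha>) * indicator {3/4-1..3/4+1} t \<partial>lborel)"
    by (intro nn_integral_add) auto
  also have "\<dots> = ennreal (2/(\<alpha>+1)) + ennreal (2/(\<alpha>+1))"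
    using nn_abs_powr_sym[OF assms(1), of "1/4"] nn_abs_powr_sym[OF assms(1), of "3/4"] by simp
  also have "\<dots> = ennreal (2/(\<alpha>+1) + 2/(\<alpha>+1))" using assms
    by (subst ennreal_plus) auto
  also have "(2::real)/(\<alpha>+1) + 2/(\<alpha>+1) = 4/(\<alpha>+1)" by (simp add: add_divide_distrib[symmetric])
  finally show ?thesis .
qed

definition Wt :: "real \<Rightarrow> real \<Rightarrow> real \<Rightarrow> real" where
  "Wt \<alpha> c x = (if c < x \<and> x < 2*c then (x - c) powr \<alpha> else 0)"

lemma Wt_nonneg: "Wt \<alpha> c x \<ge> 0" by (simp add: Wt_def)

lemma Wt_measurable[measurable]: "Wt \<alpha> c \<in> borel_measurable borel"
  unfolding Wt_def by measurable

lemma r_int_bound: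
  fixes \<alpha> c X \<kappa> :: real assumes "\<alpha> > -1" "\<alpha> \<le> 0" "c > 0" "\<kappa> \<noteq> 0"
  shows "(\<integral>\<^sup>+r. ennreal (Wt \<alpha> c (X - r*\<kappa>)) * indicator {c/4..c/2} r \<partial>lborel)
     \<le> ennreal ((c/4) powr (\<alpha>+1)/(\<alpha>+1) * \<bar>\<kappa>\<bar> powr \<alpha>)"
proof -
  define a' where "a' = X - c - (if \<kappa> > 0 then \<kappa>*c/2 else \<kappa>*c/4)"
  define L where "L = \<bar>\<kappa>\<bar> * (c/4)"
  have L0: "L \<ge> 0" using assms by (simp add: L_def)
  define G where "G s = ennreal (s powr \<alpha>) * indicator {0<..} s * indicator {a'..a'+L} s" for s
  have Gm[measurable]: "G \<in> borel_measurable borel" unfolding G_def by measurable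
  have "(\<integral>\<^sup>+r. ennreal (Wt \<alpha> c (X - r*\<kappa>)) * indicator {c/4..c/2} r \<partial>lborel)
      \<le> (\<integral>\<^sup>+r. G ((X - c) + (-\<kappa>) * r) \<partial>lborel)"
  proof (intro nn_integral_mono)
    fix r
    show "ennreal (Wt \<alpha> c (X - r*\<kappa>)) * indicator {c/4..c/2} r \<le> G ((X - c) + (-\<kappa>) * r)"
    proof (cases "r \<in> {c/4..c/2} \<and> c < X - r*\<kappa> \<and> X - r*\<kappa> < 2*c")
      case True
      have "(X - c) + (-\<kappa>) * r \<in> {a'..a'+L}"
      proof (cases "\<kappa> > 0")
        case k: True
        have "\<kappa> * r \<le> \<kappa> * (c/2)" "\<kappa> * (c/4) \<le> \<kappa> * r" using True k by (auto intro: mult_left_mono)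
        thus ?thesis using k by (auto simp: a'_def L_def algebra_simps)
      next
        case k: False
        hence k': "\<kappa> < 0" using assms by auto
        have "\<kappa> * r \<ge> \<kappa> * (c/2)" "\<kappa> * (c/4) \<ge> \<kappa> * r" using True k' by (auto intro: mult_left_mono_neg)
        thus ?thesis using k' by (auto simp: a'_def L_def algebra_simps)
      qed
      moreover have "(X - c) + (-\<kappa>) * r > 0" using True by (auto simp: algebra_simps)
      ultimately show ?thesis using True by (auto simp: G_def Wt_def indicator_def algebra_simps)
    next
      case False
      thus ?thesis by (auto simp: G_def Wt_def indicator_def)
    qed
  qed
  also have "\<dots> = ennreal (1/\<bar>\<kappa>\<bar>) * (\<integral>\<^sup>+s. G s \<partial>lborel)"
  proof -
    have "(\<integral>\<^sup>+s. G s \<partial>lborel) = ennreal \<bar>-\<kappa>\<bar> * (\<integral>\<^sup>+r. G ((X - c) + (-\<kappa>) * r) \<partial>lborel)"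
      using assms by (intro nn_integral_real_affine) auto
    hence "ennreal (1/\<bar>\<kappa>\<bar>) * (\<integral>\<^sup>+s. G s \<partial>lborel)
        = (ennreal (1/\<bar>\<kappa>\<bar>) * ennreal \<bar>\<kappa>\<bar>) * (\<integral>\<^sup>+r. G ((X - c) + (-\<kappa>) * r) \<partial>lborel)"
      by (simp add: mult.assoc)
    also have "ennreal (1/\<bar>\<kappa>\<bar>) * ennreal \<bar>\<kappa>\<bar> = 1"
      using assms by (subst ennreal_mult[symmetric]) auto
    finally show ?thesis by simp
  qed
  also have "\<dots> \<le> ennreal (1/\<bar>\<kappa>\<bar>) * ennreal (L powr (\<alpha>+1)/(\<alpha>+1))"
    unfolding G_def by (intro mult_left_mono nn_powr_interval assms L0) auto
  also have "\<dots> = ennreal (1/\<bar>\<kappa>\<bar> * (L powr (\<alpha>+1)/(\<alpha>+1)))"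
    using assms by (subst ennreal_mult) auto
  also have "1/\<bar>\<kappa>\<bar> * (L powr (\<alpha>+1)/(\<alpha>+1)) = (c/4) powr (\<alpha>+1)/(\<alpha>+1) * \<bar>\<kappa>\<bar> powr \<alpha>"
  proof -
    have "L powr (\<alpha>+1) = \<bar>\<kappa>\<bar> powr (\<alpha>+1) * (c/4) powr (\<alpha>+1)"
      unfolding L_def using assms by (subst powr_mult) auto
    also have "\<bar>\<kappa>\<bar> powr (\<alpha>+1) = \<bar>\<kappa>\<bar> powr \<alpha> * \<bar>\<kappa>\<bar>"
      using assms by (simp add: powr_add)
    finally show ?thesis using assms by (simp add: field_simps)
  qed
  finally show ?thesis .
qed

lemma cos_nonzero_AE:
  "AE t in lborel. t \<in> {0..1} \<longrightarrow> cos (2*pi*t) \<noteq> 0"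
  using AE_lborel_singleton[of "1/4"] AE_lborel_singleton[of "3/4"]
proof eventually_elim
  case (elim t)
  show ?case
  proof
    assume t: "t \<in> {0..1}"
    have "dq t > 0" using elim by (auto simp: dq_def)
    thus "cos (2*pi*t) \<noteq> 0" using cos_ge_dq[of t] t by auto
  qed
qed

definition Iv :: "real \<Rightarrow> real \<Rightarrow> real \<Rightarrow> ennreal" where
  "Iv \<alpha> c X = (\<integral>\<^sup>+r. \<integral>\<^sup>+t. indicator {c/4..c/2} r * indicator {0..1} t
                    * ennreal (Wt \<alpha> c (X - r * cos (2*pi*t))) \<partial>lborel \<partial>lborel)"

lemma I_bound:
  fixes \<alpha> c X :: real assumes "\<alpha> > -1" "\<alpha> \<le> 0" "c > 0" "X > 0"
  shows "ennreal (4/c) * Iv \<alpha> c X \<le> ennreal (10 powr (-\<alpha>) * (4/(\<alpha>+1)^2) * X powr \<alpha>)"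
proof (cases "X \<ge> 5*c/2")
  case True
  have z: "indicator {c/4..c/2} r * indicator {0..1} t * ennreal (Wt \<alpha> c (X - r * cos (2*pi*t))) = 0" for r t :: real
  proof (cases "r \<in> {c/4..c/2}")
    case r: True
    have "r * cos (2*pi*t) \<le> r * 1" using r assms by (intro mult_left_mono) auto
    hence "X - r * cos (2*pi*t) \<ge> 2*c" using r True by auto
    thus ?thesis by (simp add: Wt_def)
  qed auto
  have "Iv \<alpha> c X = 0" unfolding Iv_def z by simp
  thus ?thesis by simp
next
  case False
  define B where "B = (c/4) powr (\<alpha>+1)/(\<alpha>+1)"
  have B0: "B \<ge> 0" using assms by (simp add: B_def)
  have "Iv \<alpha> c X = (\<integral>\<^sup>+t. \<integral>\<^sup>+r. indicator {c/4..c/2} r * indicator {0..1} t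
                    * ennreal (Wt \<alpha> c (X - r * cos (2*pi*t))) \<partial>lborel \<partial>lborel)"
    unfolding Iv_def by (rule lborel_pair.Fubini') measurable
  also have "\<dots> = (\<integral>\<^sup>+t. indicator {0..1} t * (\<integral>\<^sup>+r. ennreal (Wt \<alpha> c (X - r * cos (2*pi*t))) * indicator {c/4..c/2} r \<partial>lborel) \<partial>lborel)"
    by (intro nn_integral_cong, subst nn_integral_cmult[symmetric]) (auto intro!: nn_integral_cong simp: mult_ac)
  also have "\<dots> \<le> (\<integral>\<^sup>+t. ennreal B * (ennreal (\<bar>cos (2*pi*t)\<bar> powr \<alpha>) * indicator {0..1} t) \<partial>lborel)"
  proof (rule nn_integral_mono_AE)
    show "AE t in lborel. indicator {0..1} t * (\<integral>\<^sup>+r. ennreal (Wt \<alpha> c (X - r * cos (2*pi*t))) * indicator {c/4..c/2} r \<partial>lborel)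
       \<le> ennreal B * (ennreal (\<bar>cos (2*pi*t)\<bar> powr \<alpha>) * indicator {0..1} t)"
      using cos_nonzero_AE
    proof eventually_elim
      case (elim t)
      show ?case
      proof (cases "t \<in> {0..1}")
        case True
        hence "cos (2*pi*t) \<noteq> 0" using elim by auto
        from r_int_bound[OF assms(1-3) this, of X]
        have "(\<integral>\<^sup>+r. ennreal (Wt \<alpha> c (X - r * cos (2*pi*t))) * indicator {c/4..c/2} r \<partial>lborel)
             \<le> ennreal B * ennreal (\<bar>cos (2*pi*t)\<bar> powr \<alpha>)"
          using B0 by (simp add: B_def ennreal_mult[symmetric])
        thus ?thesis using True by simp
      qed simp
    qed
  qed
  also have "\<dots> = ennreal B * (\<integral>\<^sup>+t. ennreal (\<bar>cos (2*pi*t)\<bar> powr \<alpha>) * indicator {0..1} t \<partial>lborel)"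
    by (rule nn_integral_cmult) measurable
  also have "\<dots> \<le> ennreal B * ennreal (4/(\<alpha>+1))"
    by (intro mult_left_mono J_bound assms) auto
  also have "ennreal B * ennreal (4/(\<alpha>+1)) = ennreal (B * (4/(\<alpha>+1)))" using B0 assms by (intro ennreal_mult[symmetric]) auto
  finally have I: "Iv \<alpha> c X \<le> ennreal (B * (4/(\<alpha>+1)))" .
  have "ennreal (4/c) * Iv \<alpha> c X \<le> ennreal (4/c) * ennreal (B * (4/(\<alpha>+1)))"
    by (intro mult_left_mono I) auto
  also have "\<dots> = ennreal ((4/c) * (B * (4/(\<alpha>+1))))" using B0 assms by (intro ennreal_mult[symmetric]) auto
  also have "(4/c) * (B * (4/(\<alpha>+1))) = (4/c) * B * (4/(\<alpha>+1))" by simp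
  also have "(4/c) * B = (c/4) powr \<alpha> / (\<alpha>+1)"
  proof -
    have "(c/4) powr (\<alpha>+1) = (c/4) powr \<alpha> * (c/4)" using assms by (simp add: powr_add)
    thus ?thesis using assms by (simp add: B_def field_simps)
  qed
  also have "(c/4) powr \<alpha> / (\<alpha>+1) * (4/(\<alpha>+1)) \<le> 10 powr (-\<alpha>) * (4/(\<alpha>+1)^2) * X powr \<alpha>"
  proof -
    have "X \<le> 10 * (c/4)" using False by auto
    hence "(10 * (c/4)) powr \<alpha> \<le> X powr \<alpha>" using powr_mono2'[OF assms(2) assms(4)] by auto
    moreover have "(10 * (c/4)) powr \<alpha> = 10 powr \<alpha> * (c/4) powr \<alpha>" using powr_mult[of 10 "c/4" \<alpha>] assms by simp
    ultimately have "10 powr \<alpha> * (c/4) powr \<alpha> \<le> X powr \<alpha>" by simp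
    hence "10 powr (-\<alpha>) * (10 powr \<alpha> * (c/4) powr \<alpha>) \<le> 10 powr (-\<alpha>) * X powr \<alpha>"
      by (intro mult_left_mono) auto
    hence "(c/4) powr \<alpha> \<le> 10 powr (-\<alpha>) * X powr \<alpha>"
      by (simp add: mult.assoc[symmetric] powr_add[symmetric])
    hence "(c/4) powr \<alpha> * (4/(\<alpha>+1)^2) \<le> 10 powr (-\<alpha>) * X powr \<alpha> * (4/(\<alpha>+1)^2)"
      using assms by (intro mult_right_mono) auto
    thus ?thesis by (simp add: power2_eq_square field_simps)
  qed
  finally show ?thesis by (simp add: ennreal_leI)
qed

lemma circle_mean:
  fixes h :: "complex \<Rightarrow> complex" assumes h: "h holomorphic_on cball u r" and r: "r > 0"
  shows "((\<lambda>t. h (u + complex_of_real r * exp (2 * complex_of_real pi * \<i> * complex_of_real t))) has_integral h u) {0..1}"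
proof -
  have "((\<lambda>z. h z/(z-u)) has_contour_integral (2 * of_real pi * \<i> * h u)) (circlepath u r)"
    using Cauchy_integral_circlepath_simple[OF h] r by simp
  hence "((\<lambda>t. h (circlepath u r t)/(circlepath u r t - u) * vector_derivative (circlepath u r) (at t within {0..1}))
          has_integral (2 * of_real pi * \<i> * h u)) {0..1}"
    unfolding has_contour_integral_def .
  hence "((\<lambda>t. (2 * of_real pi * \<i>) * h (u + complex_of_real r * exp (2 * complex_of_real pi * \<i> * complex_of_real t)))
          has_integral (2 * of_real pi * \<i> * h u)) {0..1}"
  proof (rule has_integral_eq[rotated])
    fix t :: real assume t: "t \<in> {0..1}"
    show "h (circlepath u r t)/(circlepath u r t - u) * vector_derivative (circlepath u r) (at t within {0..1})
        = (2 * of_real pi * \<i>) * h (u + complex_of_real r * exp (2 * complex_of_real pi * \<i> * complex_of_real t))"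
    proof -
      have d: "vector_derivative (circlepath u r) (at t within {0..1}) = 2 * pi * \<i> * r * exp(2 * of_real pi * \<i> * t)"
        using t by (intro vector_derivative_circlepath01) auto
      have e: "circlepath u r t = u + complex_of_real r * exp (2 * complex_of_real pi * \<i> * complex_of_real t)"
        by (simp add: circlepath)
      show ?thesis unfolding d e using r by (simp add: field_simps)
    qed
  qed
  hence "((\<lambda>t. inverse (2 * of_real pi * \<i>) * ((2 * of_real pi * \<i>) * h (u + complex_of_real r * exp (2 * complex_of_real pi * \<i> * complex_of_real t))))
          has_integral (inverse (2 * of_real pi * \<i>) * (2 * of_real pi * \<i> * h u))) {0..1}"
    by (rule has_integral_mult_right)
  thus ?thesis by (simp add: field_simps)
qed

lemma circle_mean_norm:
  fixes h :: "complex \<Rightarrow> complex" assumes h: "h holomorphic_on cball u r" and r: "r > 0"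
  shows "ennreal (cmod (h u)) \<le> (\<integral>\<^sup>+t. ennreal (cmod (h (u + complex_of_real r * exp (2 * complex_of_real pi * \<i> * complex_of_real t)))) * indicator {0..1} t \<partial>lborel)"
proof -
  define F where "F t = h (u + complex_of_real r * exp (2 * complex_of_real pi * \<i> * complex_of_real t))" for t
  have hF: "(F has_integral h u) {0..1}" unfolding F_def by (rule circle_mean[OF h r])
  have cont: "continuous_on {0..1} F"
  proof -
    have c1: "continuous_on {0..1} (\<lambda>t. u + complex_of_real r * exp (2 * complex_of_real pi * \<i> * complex_of_real t))"
      by (intro continuous_intros)
    have c2: "(\<lambda>t. u + complex_of_real r * exp (2 * complex_of_real pi * \<i> * complex_of_real t)) ` {0..1} \<subseteq> cball u r"
      using r by (auto simp: dist_norm norm_mult)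
    have c3: "continuous_on (cball u r) h" using h holomorphic_on_imp_continuous_on by blast
    show ?thesis unfolding F_def by (rule continuous_on_compose2[OF c3 c1 c2])
  qed
  have intn: "(\<lambda>t. cmod (F t)) integrable_on {0..1}"
    by (intro integrable_continuous_interval continuous_intros cont)
  have "cmod (h u) \<le> integral {0..1} (\<lambda>t. cmod (F t))"
    using integral_norm_bound_integral[OF has_integral_integrable[OF hF] intn] integral_unique[OF hF] by auto
  moreover have "(\<integral>\<^sup>+t. ennreal (cmod (F t)) * indicator {0..1} t \<partial>lborel) = ennreal (integral {0..1} (\<lambda>t. cmod (F t)))"
    by (rule nn_integral_has_integral_lebesgue') (auto intro: integrable_integral intn)
  ultimately show ?thesis unfolding F_def[symmetric] by (simp add: ennreal_leI)
qed

definition gf :: "(complex \<Rightarrow> complex) \<Rightarrow> complex \<Rightarrow> complex" where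
  "gf f z = indicator right_half_plane z *\<^sub>R f z"

lemma rhp_open: "open right_half_plane"
  unfolding right_half_plane_def by (rule open_halfspace_Re_gt)

lemma gf_meas[measurable]:
  assumes "f holomorphic_on right_half_plane"
  shows "gf f \<in> borel_measurable borel"
proof -
  have "right_half_plane \<in> sets borel" using rhp_open by auto
  moreover have "continuous_on right_half_plane f" using assms holomorphic_on_imp_continuous_on by blast
  ultimately show ?thesis unfolding gf_def[abs_def] by (rule borel_measurable_continuous_on_indicator)
qed

definition Ee :: "real \<Rightarrow> complex" where
  "Ee t = exp (2 * complex_of_real pi * \<i> * complex_of_real t)"

lemma Ee_meas[measurable]: "Ee \<in> borel_measurable borel"
  unfolding Ee_def by (intro borel_measurable_continuous_onI continuous_intros)

lemma Re_Ee: "Re (complex_of_real r * Ee t) = r * cos (2*pi*t)"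
  by (simp add: Ee_def Re_exp)

lemma Re_Ee1: "Re (Ee t) = cos (2*pi*t)"
  by (simp add: Ee_def Re_exp)

lemma test_meas:
  assumes [measurable]: "g \<in> borel_measurable borel"
  shows "(\<lambda>(u, r). \<integral>\<^sup>+t. indicator {a..b} r * indicator {0..1} t * ennreal ((cmod (g (u + complex_of_real r * Ee t)))\<^sup>2 * Wt \<alpha> c (Re u)) \<partial>lborel)
     \<in> borel_measurable (lborel \<Otimes>\<^sub>M lborel)"
  by measurable

lemma pointwise_mean:
  assumes hol: "f holomorphic_on right_half_plane" and c: "c > 0"
  shows "ennreal ((cmod (gf f u))\<^sup>2 * Wt \<alpha> c (Re u)) \<le> ennreal (4/c) *
    (\<integral>\<^sup>+r. \<integral>\<^sup>+t. indicator {c/4..c/2} r * indicator {0..1} t *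
        ennreal ((cmod (gf f (u + complex_of_real r * Ee t)))\<^sup>2 * Wt \<alpha> c (Re u)) \<partial>lborel \<partial>lborel)"
proof (cases "c < Re u \<and> Re u < 2*c")
  case False
  hence "Wt \<alpha> c (Re u) = 0" by (simp add: Wt_def)
  thus ?thesis by simp
next
  case True
  define M where "M = (cmod (gf f u))\<^sup>2 * Wt \<alpha> c (Re u)"
  have W0: "Wt \<alpha> c (Re u) \<ge> 0" by (rule Wt_nonneg)
  have inner: "indicator {c/4..c/2} r * ennreal M \<le> (\<integral>\<^sup>+t. indicator {c/4..c/2} r * indicator {0..1} t *
        ennreal ((cmod (gf f (u + complex_of_real r * Ee t)))\<^sup>2 * Wt \<alpha> c (Re u)) \<partial>lborel)" for r
  proof (cases "r \<in> {c/4..c/2}")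
    case False thus ?thesis by simp
  next
    case r: True
    have r0: "r > 0" using r c by auto
    have sub: "cball u r \<subseteq> right_half_plane"
    proof
      fix z assume "z \<in> cball u r"
      hence "cmod (u - z) \<le> r" by (simp add: dist_norm)
      hence "\<bar>Re (u - z)\<bar> \<le> r" using abs_Re_le_cmod order_trans by blast
      thus "z \<in> right_half_plane" using True r by (auto simp: right_half_plane_def)
    qed
    have hol2: "(\<lambda>z. f z ^ 2) holomorphic_on cball u r"
      using holomorphic_on_subset[OF hol sub] by (intro holomorphic_intros)
    have "ennreal (cmod (f u ^ 2)) \<le> (\<integral>\<^sup>+t. ennreal (cmod (f (u + complex_of_real r * Ee t) ^ 2)) * indicator {0..1} t \<partial>lborel)"
      using circle_mean_norm[OF hol2 r0] unfolding Ee_def by simp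
    also have "\<dots> = (\<integral>\<^sup>+t. ennreal ((cmod (gf f (u + complex_of_real r * Ee t)))\<^sup>2) * indicator {0..1} t \<partial>lborel)"
    proof (intro nn_integral_cong)
      fix t :: real
      show "ennreal (cmod (f (u + complex_of_real r * Ee t) ^ 2)) * indicator {0..1} t = ennreal ((cmod (gf f (u + complex_of_real r * Ee t)))\<^sup>2) * indicator {0..1} t"
      proof -
        have "u + complex_of_real r * Ee t \<in> cball u r" using r0 by (simp add: Ee_def dist_norm norm_mult)
        hence "u + complex_of_real r * Ee t \<in> right_half_plane" using sub by auto
        thus ?thesis by (simp add: gf_def norm_power)
      qed
    qed
    finally have mv: "ennreal ((cmod (gf f u))\<^sup>2) \<le> (\<integral>\<^sup>+t. ennreal ((cmod (gf f (u + complex_of_real r * Ee t)))\<^sup>2) * indicator {0..1} t \<partial>lborel)"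
      using True by (simp add: gf_def right_half_plane_def norm_power)
    have "indicator {c/4..c/2} r * ennreal M = ennreal (Wt \<alpha> c (Re u)) * ennreal ((cmod (gf f u))\<^sup>2)"
      using r W0 by (simp add: M_def ennreal_mult[symmetric] mult.commute)
    also have "\<dots> \<le> ennreal (Wt \<alpha> c (Re u)) * (\<integral>\<^sup>+t. ennreal ((cmod (gf f (u + complex_of_real r * Ee t)))\<^sup>2) * indicator {0..1} t \<partial>lborel)"
      by (intro mult_left_mono mv) auto
    also have "\<dots> = (\<integral>\<^sup>+t. ennreal (Wt \<alpha> c (Re u)) * (ennreal ((cmod (gf f (u + complex_of_real r * Ee t)))\<^sup>2) * indicator {0..1} t) \<partial>lborel)"
      by (rule nn_integral_cmult[symmetric]) (use hol in measurable)
    also have "\<dots> = (\<integral>\<^sup>+t. indicator {c/4..c/2} r * indicator {0..1} t *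
        ennreal ((cmod (gf f (u + complex_of_real r * Ee t)))\<^sup>2 * Wt \<alpha> c (Re u)) \<partial>lborel)"
      using r W0 by (intro nn_integral_cong) (simp add: ennreal_mult' mult_ac)
    finally show ?thesis .
  qed
  have "(\<integral>\<^sup>+r. indicator {c/4..c/2} r * ennreal M \<partial>lborel) \<le> (\<integral>\<^sup>+r. \<integral>\<^sup>+t. indicator {c/4..c/2} r * indicator {0..1} t *
        ennreal ((cmod (gf f (u + complex_of_real r * Ee t)))\<^sup>2 * Wt \<alpha> c (Re u)) \<partial>lborel \<partial>lborel)"
    by (intro nn_integral_mono inner)
  moreover have "(\<integral>\<^sup>+r. indicator {c/4..c/2} r * ennreal M \<partial>lborel) = ennreal M * ennreal (c/4)"
  proof -
    have "(\<integral>\<^sup>+r. indicator {c/4..c/2} r * ennreal M \<partial>lborel) = (\<integral>\<^sup>+r. ennreal M * indicator {c/4..c/2} r \<partial>lborel)"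
      by (simp add: mult.commute)
    also have "\<dots> = ennreal M * emeasure lborel {c/4..c/2}" by (rule nn_integral_cmult_indicator) auto
    also have "emeasure lborel {c/4..c/2} = ennreal (c/4)" using c by simp
    finally show ?thesis .
  qed
  ultimately have "ennreal (4/c) * (ennreal M * ennreal (c/4)) \<le> ennreal (4/c) * (\<integral>\<^sup>+r. \<integral>\<^sup>+t. indicator {c/4..c/2} r * indicator {0..1} t *
        ennreal ((cmod (gf f (u + complex_of_real r * Ee t)))\<^sup>2 * Wt \<alpha> c (Re u)) \<partial>lborel \<partial>lborel)"
    by (intro mult_left_mono) auto
  moreover have "ennreal (4/c) * (ennreal M * ennreal (c/4)) = ennreal M"
  proof -
    have "ennreal (4/c) * (ennreal M * ennreal (c/4)) = ennreal M * (ennreal (4/c) * ennreal (c/4))" by (simp add: mult_ac)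
    also have "ennreal (4/c) * ennreal (c/4) = 1" using c by (simp add: ennreal_mult[symmetric])
    finally show ?thesis by simp
  qed
  ultimately show ?thesis by (simp add: M_def)
qed

lemma near_bound:
  assumes hol: "f holomorphic_on right_half_plane" and c: "c > 0" and al: "\<alpha> > -1" "\<alpha> \<le> 0"
  shows "(\<integral>\<^sup>+u. ennreal ((cmod (gf f u))\<^sup>2 * Wt \<alpha> c (Re u)) \<partial>lborel)
     \<le> ennreal (10 powr (-\<alpha>) * (4/(\<alpha>+1)^2)) *
        (\<integral>\<^sup>+v. ennreal ((cmod (gf f v))\<^sup>2 * Re v powr \<alpha>) * indicator right_half_plane v \<partial>lborel)"
proof -
  define K1 where "K1 = 10 powr (-\<alpha>) * (4/(\<alpha>+1)^2)"
  have K10: "K1 \<ge> 0" by (simp add: K1_def)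
  note gm[measurable] = gf_meas[OF hol]
  define H3 where "H3 u r t = indicator {c/4..c/2} r * indicator {0..1} t *
        ennreal ((cmod (gf f (u + complex_of_real r * Ee t)))\<^sup>2 * Wt \<alpha> c (Re u))" for u r t
  define H4 where "H4 v r t = indicator {c/4..c/2} r * indicator {0..1} t *
        ennreal ((cmod (gf f v))\<^sup>2 * Wt \<alpha> c (Re v - r * cos (2*pi*t)))" for v r t
  have "(\<integral>\<^sup>+u. ennreal ((cmod (gf f u))\<^sup>2 * Wt \<alpha> c (Re u)) \<partial>lborel)
      \<le> (\<integral>\<^sup>+u. ennreal (4/c) * (\<integral>\<^sup>+r. \<integral>\<^sup>+t. H3 u r t \<partial>lborel \<partial>lborel) \<partial>lborel)"
    unfolding H3_def by (intro nn_integral_mono pointwise_mean[OF hol c])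
  also have "\<dots> = ennreal (4/c) * (\<integral>\<^sup>+u. \<integral>\<^sup>+r. \<integral>\<^sup>+t. H3 u r t \<partial>lborel \<partial>lborel \<partial>lborel)"
    by (rule nn_integral_cmult) (unfold H3_def H4_def, measurable)
  also have "(\<integral>\<^sup>+u. \<integral>\<^sup>+r. \<integral>\<^sup>+t. H3 u r t \<partial>lborel \<partial>lborel \<partial>lborel)
      = (\<integral>\<^sup>+r. \<integral>\<^sup>+u. \<integral>\<^sup>+t. H3 u r t \<partial>lborel \<partial>lborel \<partial>lborel)"
    by (rule lborel_pair.Fubini') (unfold H3_def H4_def, measurable)
  also have "\<dots> = (\<integral>\<^sup>+r. \<integral>\<^sup>+t. \<integral>\<^sup>+u. H3 u r t \<partial>lborel \<partial>lborel \<partial>lborel)"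
    by (intro nn_integral_cong lborel_pair.Fubini') (unfold H3_def H4_def, measurable)
  also have "\<dots> = (\<integral>\<^sup>+r. \<integral>\<^sup>+t. \<integral>\<^sup>+v. H4 v r t \<partial>lborel \<partial>lborel \<partial>lborel)"
  proof (rule nn_integral_cong, rule nn_integral_cong)
    fix r t :: real
    define z where "z = complex_of_real r * Ee t"
    have "(\<integral>\<^sup>+v. H4 v r t \<partial>lborel) = (\<integral>\<^sup>+v. H4 v r t \<partial>(distr lborel borel ((+) z)))"
      by (simp add: lborel_distr_plus)
    also have "\<dots> = (\<integral>\<^sup>+u. H4 (z + u) r t \<partial>lborel)"
      by (rule nn_integral_distr) (auto simp: H4_def)
    also have "\<dots> = (\<integral>\<^sup>+u. H3 u r t \<partial>lborel)"
      by (intro nn_integral_cong) (simp add: H3_def H4_def z_def Re_Ee Re_Ee1 add.commute)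
    finally show "(\<integral>\<^sup>+u. H3 u r t \<partial>lborel) = (\<integral>\<^sup>+v. H4 v r t \<partial>lborel)" by simp
  qed
  also have "\<dots> = (\<integral>\<^sup>+r. \<integral>\<^sup>+v. \<integral>\<^sup>+t. H4 v r t \<partial>lborel \<partial>lborel \<partial>lborel)"
    by (intro nn_integral_cong lborel_pair.Fubini'[symmetric]) (unfold H3_def H4_def, measurable)
  also have "\<dots> = (\<integral>\<^sup>+v. \<integral>\<^sup>+r. \<integral>\<^sup>+t. H4 v r t \<partial>lborel \<partial>lborel \<partial>lborel)"
    by (rule lborel_pair.Fubini'[symmetric]) (unfold H3_def H4_def, measurable)
  also have "\<dots> = (\<integral>\<^sup>+v. ennreal ((cmod (gf f v))\<^sup>2) * Iv \<alpha> c (Re v) \<partial>lborel)"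
  proof (intro nn_integral_cong)
    fix v
    have "(\<integral>\<^sup>+r. \<integral>\<^sup>+t. H4 v r t \<partial>lborel \<partial>lborel) = (\<integral>\<^sup>+r. ennreal ((cmod (gf f v))\<^sup>2) * (\<integral>\<^sup>+t. indicator {c/4..c/2} r * indicator {0..1} t
                    * ennreal (Wt \<alpha> c (Re v - r * cos (2*pi*t))) \<partial>lborel) \<partial>lborel)"
      by (intro nn_integral_cong, subst nn_integral_cmult[symmetric])
         (auto simp: H4_def ennreal_mult' Wt_nonneg mult_ac intro!: nn_integral_cong)
    also have "\<dots> = ennreal ((cmod (gf f v))\<^sup>2) * Iv \<alpha> c (Re v)"
      unfolding Iv_def by (rule nn_integral_cmult) measurable
    finally show "(\<integral>\<^sup>+r. \<integral>\<^sup>+t. H4 v r t \<partial>lborel \<partial>lborel) = ennreal ((cmod (gf f v))\<^sup>2) * Iv \<alpha> c (Re v)" .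
  qed
  finally have step: "(\<integral>\<^sup>+u. ennreal ((cmod (gf f u))\<^sup>2 * Wt \<alpha> c (Re u)) \<partial>lborel)
      \<le> ennreal (4/c) * (\<integral>\<^sup>+v. ennreal ((cmod (gf f v))\<^sup>2) * Iv \<alpha> c (Re v) \<partial>lborel)" .
  also have "\<dots> = (\<integral>\<^sup>+v. ennreal ((cmod (gf f v))\<^sup>2) * (ennreal (4/c) * Iv \<alpha> c (Re v)) \<partial>lborel)"
    by (subst nn_integral_cmult[symmetric]) (auto simp: Iv_def mult_ac)
  also have "\<dots> \<le> (\<integral>\<^sup>+v. ennreal K1 * (ennreal ((cmod (gf f v))\<^sup>2 * Re v powr \<alpha>) * indicator right_half_plane v) \<partial>lborel)"
  proof (intro nn_integral_mono)
    fix v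
    show "ennreal ((cmod (gf f v))\<^sup>2) * (ennreal (4/c) * Iv \<alpha> c (Re v))
        \<le> ennreal K1 * (ennreal ((cmod (gf f v))\<^sup>2 * Re v powr \<alpha>) * indicator right_half_plane v)"
    proof (cases "Re v > 0")
      case True
      have "ennreal ((cmod (gf f v))\<^sup>2) * (ennreal (4/c) * Iv \<alpha> c (Re v))
          \<le> ennreal ((cmod (gf f v))\<^sup>2) * ennreal (K1 * Re v powr \<alpha>)"
        unfolding K1_def by (intro mult_left_mono I_bound al c True) auto
      also have "\<dots> = ennreal K1 * (ennreal ((cmod (gf f v))\<^sup>2 * Re v powr \<alpha>) * indicator right_half_plane v)"
        using True K10 by (simp add: right_half_plane_def ennreal_mult'[symmetric] mult_ac)
      finally show ?thesis .
    next
      case False thus ?thesis by (simp add: gf_def right_half_plane_def)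
    qed
  qed
  also have "\<dots> = ennreal K1 * (\<integral>\<^sup>+v. ennreal ((cmod (gf f v))\<^sup>2 * Re v powr \<alpha>) * indicator right_half_plane v \<partial>lborel)"
    by (rule nn_integral_cmult) (unfold right_half_plane_def, measurable)
  finally show ?thesis unfolding K1_def .
qed

definition Pn :: "real \<Rightarrow> (complex \<Rightarrow> complex) \<Rightarrow> real \<Rightarrow> ennreal" where
  "Pn \<alpha> f c = (\<integral>\<^sup>+u. ennreal ((cmod (gf f u))\<^sup>2 * (Re u - c) powr \<alpha>) * indicator {u. Re u > c} u \<partial>lborel)"

definition Kc :: "real \<Rightarrow> real" where
  "Kc \<alpha> = (if \<alpha> \<ge> 0 then 1 else 2 powr (-\<alpha>) + 10 powr (-\<alpha>) * (4/(\<alpha>+1)^2))"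

lemma Kc_ge1: "Kc \<alpha> \<ge> 1"
proof (cases "\<alpha> \<ge> 0")
  case False
  hence "2 powr (-\<alpha>) \<ge> 1" by (simp add: ge_one_powr_ge_zero)
  moreover have "10 powr (-\<alpha>) * (4/(\<alpha>+1)^2) \<ge> 0" by simp
  ultimately have "1 \<le> 2 powr (-\<alpha>) + 10 powr (-\<alpha>) * (4/(\<alpha>+1)^2)" by linarith
  thus ?thesis using False by (simp only: Kc_def if_False)
qed (simp add: Kc_def)

lemma Pn0: "Pn \<alpha> f 0 = (\<integral>\<^sup>+v. ennreal ((cmod (gf f v))\<^sup>2 * Re v powr \<alpha>) * indicator right_half_plane v \<partial>lborel)"
  by (simp add: Pn_def right_half_plane_def)

lemma translate_bound:
  assumes hol: "f holomorphic_on right_half_plane" and al: "\<alpha> > -1" and c: "c \<ge> 0"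
  shows "Pn \<alpha> f c \<le> ennreal (Kc \<alpha>) * Pn \<alpha> f 0"
proof (cases "\<alpha> \<ge> 0")
  case True
  have "Pn \<alpha> f c \<le> Pn \<alpha> f 0" unfolding Pn_def
  proof (intro nn_integral_mono)
    fix u :: complex
    show "ennreal ((cmod (gf f u))\<^sup>2 * (Re u - c) powr \<alpha>) * indicator {u. Re u > c} u
       \<le> ennreal ((cmod (gf f u))\<^sup>2 * (Re u - 0) powr \<alpha>) * indicator {u. Re u > 0} u"
    proof (cases "Re u > c")
      case True
      have "(Re u - c) powr \<alpha> \<le> Re u powr \<alpha>" using True c \<open>\<alpha> \<ge> 0\<close> by (intro powr_mono2) auto
      hence "(cmod (gf f u))\<^sup>2 * (Re u - c) powr \<alpha> \<le> (cmod (gf f u))\<^sup>2 * Re u powr \<alpha>"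
        by (intro mult_left_mono) auto
      thus ?thesis using True c by (simp add: ennreal_leI)
    qed simp
  qed
  thus ?thesis using True by (simp add: Kc_def)
next
  case False
  hence al0: "\<alpha> \<le> 0" by simp
  show ?thesis
  proof (cases "c = 0")
    case True
    have "Pn \<alpha> f 0 = ennreal 1 * Pn \<alpha> f 0" by simp
    also have "\<dots> \<le> ennreal (Kc \<alpha>) * Pn \<alpha> f 0" using Kc_ge1 by (intro mult_right_mono ennreal_leI) auto
    finally show ?thesis using True by simp
  next
    case False
    hence c0: "c > 0" using c by simp
    note gm[measurable] = gf_meas[OF hol]
    have "Pn \<alpha> f c \<le> (\<integral>\<^sup>+u. ennreal ((cmod (gf f u))\<^sup>2 * Wt \<alpha> c (Re u))
        + ennreal (2 powr (-\<alpha>)) * (ennreal ((cmod (gf f u))\<^sup>2 * Re u powr \<alpha>) * indicator right_half_plane u) \<partial>lborel)"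
      unfolding Pn_def
    proof (intro nn_integral_mono)
      fix u :: complex
      show "ennreal ((cmod (gf f u))\<^sup>2 * (Re u - c) powr \<alpha>) * indicator {u. Re u > c} u
        \<le> ennreal ((cmod (gf f u))\<^sup>2 * Wt \<alpha> c (Re u))
        + ennreal (2 powr (-\<alpha>)) * (ennreal ((cmod (gf f u))\<^sup>2 * Re u powr \<alpha>) * indicator right_half_plane u)"
      proof (cases "c < Re u \<and> Re u < 2*c")
        case True thus ?thesis by (simp add: Wt_def)
      next
        case nc: False
        show ?thesis
        proof (cases "Re u > c")
          case True
          hence u2: "Re u \<ge> 2*c" using nc by auto
          have "(Re u - c) powr \<alpha> \<le> (Re u / 2) powr \<alpha>"
            using u2 c0 by (intro powr_mono2' al0) auto
          also have "(Re u / 2) powr \<alpha> = 2 powr (-\<alpha>) * Re u powr \<alpha>"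
            using u2 c0 by (simp add: powr_divide powr_minus divide_simps)
          finally have "(cmod (gf f u))\<^sup>2 * (Re u - c) powr \<alpha> \<le> (cmod (gf f u))\<^sup>2 * (2 powr (-\<alpha>) * Re u powr \<alpha>)"
            by (intro mult_left_mono) auto
          hence "ennreal ((cmod (gf f u))\<^sup>2 * (Re u - c) powr \<alpha>) \<le> ennreal (2 powr (-\<alpha>)) * ennreal ((cmod (gf f u))\<^sup>2 * Re u powr \<alpha>)"
            by (simp add: ennreal_mult'[symmetric] ennreal_leI mult_ac)
          moreover have "u \<in> right_half_plane" using True c by (simp add: right_half_plane_def)
          ultimately show ?thesis using True nc by (simp add: Wt_def add_increasing)
        qed simp
      qed
    qed
    also have "\<dots> = (\<integral>\<^sup>+u. ennreal ((cmod (gf f u))\<^sup>2 * Wt \<alpha> c (Re u)) \<partial>lborel)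
        + ennreal (2 powr (-\<alpha>)) * Pn \<alpha> f 0"
    proof -
      have m1: "(\<lambda>u. ennreal ((cmod (gf f u))\<^sup>2 * Re u powr \<alpha>) * indicator right_half_plane u) \<in> borel_measurable lborel"
        unfolding right_half_plane_def by measurable
      have m2: "(\<lambda>u. ennreal ((cmod (gf f u))\<^sup>2 * Wt \<alpha> c (Re u))) \<in> borel_measurable lborel"
        by measurable
      show ?thesis unfolding Pn0
        using nn_integral_add[OF m2 borel_measurable_times_ennreal[OF borel_measurable_const m1]]
              nn_integral_cmult[OF m1, of "ennreal (2 powr (-\<alpha>))"] by simp
    qed
    also have "\<dots> \<le> ennreal (10 powr (-\<alpha>) * (4/(\<alpha>+1)^2)) * Pn \<alpha> f 0 + ennreal (2 powr (-\<alpha>)) * Pn \<alpha> f 0"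
      unfolding Pn0 by (intro add_mono near_bound hol c0 al al0) auto
    also have "\<dots> = ennreal (Kc \<alpha>) * Pn \<alpha> f 0"
      using al0 False \<open>\<not> \<alpha> \<ge> 0\<close> by (simp add: Kc_def distrib_right[symmetric] ennreal_plus[symmetric] add.commute del: ennreal_plus)
    finally show ?thesis .
  qed
qed

definition bn :: "real \<Rightarrow> complex \<Rightarrow> nat \<Rightarrow> complex" where
  "bn a b n = complex_of_real (\<Sum>k<n. a^k) * b"

lemma iter_formula:
  "(comp_op (\<lambda>w. complex_of_real a * w + b) ^^ n) f = (\<lambda>w. f (complex_of_real (a^n) * w + bn a b n))"
proof (induction n)
  case 0 thus ?case by (simp add: bn_def)
next
  case (Suc n)
  have "(comp_op (\<lambda>w. complex_of_real a * w + b) ^^ Suc n) f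
      = comp_op (\<lambda>w. complex_of_real a * w + b) ((comp_op (\<lambda>w. complex_of_real a * w + b) ^^ n) f)" by simp
  also have "\<dots> = (\<lambda>w. f (complex_of_real (a^Suc n) * w + bn a b (Suc n)))"
    unfolding Suc comp_op_def by (rule ext) (simp add: bn_def algebra_simps)
  finally show ?case .
qed

lemma Re_bn: "a > 0 \<Longrightarrow> Re b \<ge> 0 \<Longrightarrow> Re (bn a b n) \<ge> 0"
  by (simp add: bn_def sum_nonneg)

lemma change_var:
  assumes hol: "f holomorphic_on right_half_plane" and A: "A > 0" and B: "Re B \<ge> 0"
  shows "(\<integral>\<^sup>+z. ennreal ((cmod (f (complex_of_real A * z + B)))\<^sup>2 * Re z powr \<alpha>) * indicator right_half_plane z \<partial>lborel)
       = ennreal (A powr (-2-\<alpha>)) * Pn \<alpha> f (Re B)"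
proof -
  note gm[measurable] = gf_meas[OF hol]
  define F where "F u = ennreal ((cmod (gf f u))\<^sup>2 * (Re u - Re B) powr \<alpha>) * indicator {u. Re u > Re B} u" for u
  have Fm[measurable]: "F \<in> borel_measurable borel" unfolding F_def by measurable
  define L where "L = (\<integral>\<^sup>+z. ennreal ((cmod (f (complex_of_real A * z + B)))\<^sup>2 * Re z powr \<alpha>) * indicator right_half_plane z \<partial>lborel)"
  have "Pn \<alpha> f (Re B) = (\<integral>\<^sup>+u. F u \<partial>lborel)" by (simp add: Pn_def F_def)
  also have "\<dots> = (\<integral>\<^sup>+u. F u \<partial>density (distr lborel borel (\<lambda>x. B + A *\<^sub>R x)) (\<lambda>_. ennreal (\<bar>A\<bar> ^ DIM(complex))))"
    using lborel_affine[of A B] A by simp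
  also have "\<dots> = (\<integral>\<^sup>+u. ennreal (\<bar>A\<bar> ^ DIM(complex)) * F u \<partial>distr lborel borel (\<lambda>x. B + A *\<^sub>R x))"
    by (rule nn_integral_density) auto
  also have "\<dots> = (\<integral>\<^sup>+z. ennreal (\<bar>A\<bar> ^ DIM(complex)) * F (B + A *\<^sub>R z) \<partial>lborel)"
    by (rule nn_integral_distr) auto
  also have "\<dots> = (\<integral>\<^sup>+z. ennreal (A powr (2+\<alpha>)) * (ennreal ((cmod (gf f (complex_of_real A * z + B)))\<^sup>2 * Re z powr \<alpha>) * indicator right_half_plane z) \<partial>lborel)"
  proof (intro nn_integral_cong)
    fix z :: complex
    show "ennreal (\<bar>A\<bar> ^ DIM(complex)) * F (B + A *\<^sub>R z)
       = ennreal (A powr (2+\<alpha>)) * (ennreal ((cmod (gf f (complex_of_real A * z + B)))\<^sup>2 * Re z powr \<alpha>) * indicator right_half_plane z)"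
    proof (cases "Re z > 0")
      case True
      have inH: "B + A *\<^sub>R z \<in> right_half_plane" using True A B by (simp add: right_half_plane_def add_nonneg_pos)
      have re: "Re (B + A *\<^sub>R z) - Re B = A * Re z" by simp
      have "(A * Re z) powr \<alpha> = A powr \<alpha> * Re z powr \<alpha>" using A True by (simp add: powr_mult)
      moreover have "A powr (2+\<alpha>) = A^2 * A powr \<alpha>" using A by (simp add: powr_add powr_numeral)
      moreover have "B + A *\<^sub>R z = complex_of_real A * z + B" by (simp add: scaleR_conv_of_real add.commute)
      ultimately show ?thesis using True A inH
        by (simp add: F_def gf_def right_half_plane_def ennreal_mult'[symmetric] mult_ac add.commute)
    next
      case False
      hence "\<not> Re (B + A *\<^sub>R z) > Re B" using A by (simp add: zero_less_mult_iff)
      thus ?thesis using False by (simp add: F_def right_half_plane_def)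
    qed
  qed
  also have "\<dots> = ennreal (A powr (2+\<alpha>)) * (\<integral>\<^sup>+z. ennreal ((cmod (gf f (complex_of_real A * z + B)))\<^sup>2 * Re z powr \<alpha>) * indicator right_half_plane z \<partial>lborel)"
    by (rule nn_integral_cmult) (unfold right_half_plane_def, measurable)
  also have "(\<integral>\<^sup>+z. ennreal ((cmod (gf f (complex_of_real A * z + B)))\<^sup>2 * Re z powr \<alpha>) * indicator right_half_plane z \<partial>lborel) = L"
    unfolding L_def
  proof (intro nn_integral_cong)
    fix z :: complex
    show "ennreal ((cmod (gf f (complex_of_real A * z + B)))\<^sup>2 * Re z powr \<alpha>) * indicator right_half_plane z
       = ennreal ((cmod (f (complex_of_real A * z + B)))\<^sup>2 * Re z powr \<alpha>) * indicator right_half_plane z"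
    proof (cases "Re z > 0")
      case True
      hence "complex_of_real A * z + B \<in> right_half_plane" using A B by (simp add: right_half_plane_def add_pos_nonneg)
      thus ?thesis by (simp add: gf_def)
    qed (simp add: right_half_plane_def)
  qed
  finally have eq: "Pn \<alpha> f (Re B) = ennreal (A powr (2+\<alpha>)) * L" .
  have "ennreal (A powr (-2-\<alpha>)) * Pn \<alpha> f (Re B) = (ennreal (A powr (-2-\<alpha>)) * ennreal (A powr (2+\<alpha>))) * L"
    unfolding eq by (simp add: mult.assoc)
  also have "ennreal (A powr (-2-\<alpha>)) * ennreal (A powr (2+\<alpha>)) = 1"
    using A by (simp add: ennreal_mult[symmetric] powr_add[symmetric])
  finally show ?thesis by (simp add: L_def)
qed

lemma ae_zero_imp_zero:
  fixes h :: "complex \<Rightarrow> complex"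
  assumes S: "open S" and hc: "continuous_on S h" and ae: "AE x in lborel. x \<in> S \<longrightarrow> h x = 0" and z: "z \<in> S"
  shows "h z = 0"
proof (rule ccontr)
  assume hz: "h z \<noteq> 0"
  have "open (h -` (-{0}) \<inter> S)" using hc S continuous_on_open_vimage by blast
  moreover have "z \<in> h -` (-{0}) \<inter> S" using hz z by auto
  ultimately obtain a b where box: "box a b \<subseteq> h -` (-{0}) \<inter> S" "z \<in> box a b" "\<forall>i\<in>Basis. a \<bullet> i < b \<bullet> i"
    by (rule open_contains_box)
  have "AE x in lborel. x \<notin> box a b" using ae by eventually_elim (use box in auto)
  hence "box a b \<in> null_sets lborel" by (subst AE_iff_null_sets) auto
  hence "emeasure lborel (box a b) = 0" by auto
  moreover have "0 < emeasure lborel (box a b)"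
    using box unfolding emeasure_lborel_box_eq
    by (force intro!: prod_pos simp: mem_box algebra_simps)
  ultimately show False by simp
qed

lemma rhp_connected: "connected right_half_plane"
  unfolding right_half_plane_def by (intro convex_connected convex_halfspace_Re_gt)

definition om :: "real \<Rightarrow> complex \<Rightarrow> real" where
  "om \<alpha> u = (if \<alpha> \<ge> 0 then 1 else Re u powr \<alpha>)"

lemma lower_zero:
  assumes hol: "f holomorphic_on right_half_plane" and C: "C \<ge> 0"
    and L0: "(\<integral>\<^sup>+u. ennreal ((cmod (gf f u))\<^sup>2 * om \<alpha> u) * indicator {u. Re u > C+1} u \<partial>lborel) = 0"
  shows "\<And>z. z \<in> right_half_plane \<Longrightarrow> f z = 0"
proof -
  note gm[measurable] = gf_meas[OF hol]
  have "AE u in lborel. ennreal ((cmod (gf f u))\<^sup>2 * om \<alpha> u) * indicator {u. Re u > C+1} u = 0"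
    using L0 by (subst (asm) nn_integral_0_iff_AE) (unfold om_def, measurable)
  hence ae: "AE u in lborel. u \<in> {u. Re u > C+1} \<longrightarrow> f u = 0"
  proof eventually_elim
    case (elim u)
    show ?case
    proof
      assume u: "u \<in> {u. Re u > C+1}"
      have "om \<alpha> u > 0" using u C by (auto simp: om_def)
      hence "(cmod (gf f u))\<^sup>2 = 0" using elim u
        by (auto simp: ennreal_mult'[symmetric] mult_nonneg_nonneg order.strict_implies_order)
      moreover have "u \<in> right_half_plane" using u C by (simp add: right_half_plane_def)
      ultimately show "f u = 0" by (simp add: gf_def)
    qed
  qed
  have sub: "{u. Re u > C+1} \<subseteq> right_half_plane" using C by (auto simp: right_half_plane_def)
  have zR: "f z = 0" if "z \<in> {u. Re u > C+1}" for z
    by (rule ae_zero_imp_zero[OF open_halfspace_Re_gt _ ae that])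
       (rule holomorphic_on_imp_continuous_on[OF holomorphic_on_subset[OF hol sub]])
  fix z assume z: "z \<in> right_half_plane"
  have "complex_of_real (C+2) \<in> {u. Re u > C+1}" by simp
  hence ne: "{u. Re u > C+1} \<noteq> {}" by blast
  show "f z = 0"
    by (rule analytic_continuation_open[of "{u. Re u > C+1}" right_half_plane f "\<lambda>_. 0", OF open_halfspace_Re_gt rhp_open ne rhp_connected sub hol _ zR z]) auto
qed

lemma lower_Pn:
  assumes c: "0 \<le> c" "c \<le> C"
  shows "(\<integral>\<^sup>+u. ennreal ((cmod (gf f u))\<^sup>2 * om \<alpha> u) * indicator {u. Re u > C+1} u \<partial>lborel) \<le> Pn \<alpha> f c"
  unfolding Pn_def
proof (intro nn_integral_mono)
  fix u :: complex
  show "ennreal ((cmod (gf f u))\<^sup>2 * om \<alpha> u) * indicator {u. Re u > C+1} u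
     \<le> ennreal ((cmod (gf f u))\<^sup>2 * (Re u - c) powr \<alpha>) * indicator {u. Re u > c} u"
  proof (cases "Re u > C+1")
    case True
    have "om \<alpha> u \<le> (Re u - c) powr \<alpha>"
    proof (cases "\<alpha> \<ge> 0")
      case True
      thus ?thesis using \<open>Re u > C+1\<close> c by (simp add: om_def ge_one_powr_ge_zero)
    next
      case False
      thus ?thesis using \<open>Re u > C+1\<close> c by (simp add: om_def) (rule powr_mono2', auto)
    qed
    hence "(cmod (gf f u))\<^sup>2 * om \<alpha> u \<le> (cmod (gf f u))\<^sup>2 * (Re u - c) powr \<alpha>" by (intro mult_left_mono) auto
    thus ?thesis using True c by (simp add: ennreal_leI)
  qed simp
qed

lemma norm_sq_Pn0:
  assumes hol: "f holomorphic_on right_half_plane"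
  shows "bergman_norm_sq \<alpha> f = ennreal (1/pi) * Pn \<alpha> f 0"
  using change_var[OF hol, of 1 0 \<alpha>] by (simp add: bergman_norm_sq_def)

lemma norm_sq_iter:
  assumes hol: "f holomorphic_on right_half_plane" and a: "a > 0" and b: "Re b \<ge> 0"
  shows "bergman_norm_sq \<alpha> ((comp_op (\<lambda>w. complex_of_real a * w + b) ^^ n) f)
       = ennreal (1/pi) * (ennreal ((a^n) powr (-2-\<alpha>)) * Pn \<alpha> f (Re (bn a b n)))"
  unfolding iter_formula bergman_norm_sq_def
  using change_var[OF hol, of "a^n" "bn a b n" \<alpha>] a Re_bn[OF a b] by simp

theorem mainTheorem4:
  fixes \<alpha> a :: real and b :: complex
  assumes "\<alpha> > -1" and "a > 0" and "Re b \<ge> 0"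
  shows "\<not> li_yorke_chaotic (bergman_space \<alpha>) (bergman_norm \<alpha>)
            (comp_op (\<lambda>w. complex_of_real a * w + b))"
proof
  assume "li_yorke_chaotic (bergman_space \<alpha>) (bergman_norm \<alpha>) (comp_op (\<lambda>w. complex_of_real a * w + b))"
  then obtain f where fX: "f \<in> bergman_space \<alpha>"
    and li: "liminf (\<lambda>n. ereal (bergman_norm \<alpha> ((comp_op (\<lambda>w. complex_of_real a * w + b) ^^ n) f))) = 0"
    and ls: "limsup (\<lambda>n. ereal (bergman_norm \<alpha> ((comp_op (\<lambda>w. complex_of_real a * w + b) ^^ n) f))) = \<infinity>"
    unfolding li_yorke_chaotic_def by blast
  define T where "T = comp_op (\<lambda>w. complex_of_real a * w + b)"
  define ns where "ns n = bergman_norm_sq \<alpha> ((T ^^ n) f)" for n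
  define N where "N n = bergman_norm \<alpha> ((T ^^ n) f)" for n
  have N_def': "N n = sqrt (enn2real (ns n))" for n by (simp add: N_def ns_def bergman_norm_def)
  have hol: "f holomorphic_on right_half_plane" using fX by (simp add: bergman_space_def)
  have "bergman_norm_sq \<alpha> f < \<infinity>" using fX by (simp add: bergman_space_def)
  hence "ennreal (1/pi) * Pn \<alpha> f 0 < \<infinity>" using norm_sq_Pn0[OF hol] by simp
  hence Pfin: "Pn \<alpha> f 0 < \<infinity>" by (auto simp: ennreal_mult_less_top)
  have ns_eq: "ns n = ennreal (1/pi) * (ennreal ((a^n) powr (-2-\<alpha>)) * Pn \<alpha> f (Re (bn a b n)))" for n
    unfolding ns_def T_def by (rule norm_sq_iter[OF hol assms(2,3)])
  have Pc: "Pn \<alpha> f (Re (bn a b n)) \<le> ennreal (Kc \<alpha>) * Pn \<alpha> f 0" for n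
    by (rule translate_bound[OF hol assms(1) Re_bn[OF assms(2,3)]])
  have ns_fin: "ns n < \<infinity>" for n
  proof -
    have "ns n \<le> ennreal (1/pi) * (ennreal ((a^n) powr (-2-\<alpha>)) * (ennreal (Kc \<alpha>) * Pn \<alpha> f 0))"
      unfolding ns_eq by (intro mult_left_mono Pc) auto
    also have "\<dots> < \<infinity>" using Pfin by (simp add: ennreal_mult_less_top)
    finally show ?thesis .
  qed
  show False
  proof (cases "a \<ge> 1")
    case True
    define U where "U = ennreal (1/pi) * (ennreal (Kc \<alpha>) * Pn \<alpha> f 0)"
    have Ufin: "U < \<infinity>" using Pfin by (simp add: U_def ennreal_mult_less_top)
    have "ns n \<le> U" for n
    proof -
      have "(a^n) powr (-2-\<alpha>) \<le> 1 powr (-2-\<alpha>)"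
        using True assms(1) by (intro powr_mono2') (auto simp: one_le_power)
      hence "ennreal ((a^n) powr (-2-\<alpha>)) * Pn \<alpha> f (Re (bn a b n)) \<le> ennreal 1 * (ennreal (Kc \<alpha>) * Pn \<alpha> f 0)"
        by (intro mult_mono Pc ennreal_leI) auto
      thus ?thesis unfolding ns_eq U_def by (intro mult_left_mono) auto
    qed
    hence "N n \<le> sqrt (enn2real U)" for n
      unfolding N_def' by (intro real_sqrt_le_mono enn2real_mono) (use Ufin in auto)
    hence "limsup (\<lambda>n. ereal (N n)) \<le> ereal (sqrt (enn2real U))"
      by (intro Limsup_bounded always_eventually) auto
    thus False using ls by (simp add: N_def T_def)
  next
    case False
    hence a1: "a < 1" by simp
    define C where "C = Re b / (1 - a)"
    have C0: "C \<ge> 0" using a1 assms by (simp add: C_def)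
    have cn: "Re (bn a b n) \<le> C" for n
    proof -
      have "(\<Sum>k<n. a^k) = (1 - a^n)/(1 - a)" using a1 by (simp add: sum_gp_strict)
      also have "\<dots> \<le> 1/(1-a)" using a1 assms(2) by (intro divide_right_mono) auto
      finally have "(\<Sum>k<n. a^k) * Re b \<le> 1/(1-a) * Re b" using assms(3) by (intro mult_right_mono) auto
      thus ?thesis by (simp add: bn_def C_def)
    qed
    define L0 where "L0 = (\<integral>\<^sup>+u. ennreal ((cmod (gf f u))\<^sup>2 * om \<alpha> u) * indicator {u. Re u > C+1} u \<partial>lborel)"
    show False
    proof (cases "L0 = 0")
      case True
      have fz: "f z = 0" if "z \<in> right_half_plane" for z
        by (rule lower_zero[OF hol C0 True[unfolded L0_def] that])
      have "gf f = (\<lambda>_. 0)" by (rule ext) (simp add: gf_def fz indicator_def)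
      hence "Pn \<alpha> f c = 0" for c by (simp add: Pn_def)
      hence "N n \<le> 0" for n by (simp add: N_def' ns_eq)
      hence "limsup (\<lambda>n. ereal (N n)) \<le> ereal 0"
        by (intro Limsup_bounded always_eventually) auto
      thus False using ls by (simp add: N_def T_def)
    next
      case L0nz: False
      define Lw where "Lw = ennreal (1/pi) * L0"
      have L0fin: "L0 < \<infinity>" using lower_Pn[OF order_refl C0, of f \<alpha>] Pfin unfolding L0_def by simp
      have Lwpos: "enn2real Lw > 0"
        using L0nz L0fin by (simp add: Lw_def enn2real_mult enn2real_positive_iff ennreal_mult_less_top
                                      ennreal_zero_less_mult_iff less_le enn2real_eq_0_iff)
      have "Lw \<le> ns n" for n
      proof -
        have "(a^n) powr (-2-\<alpha>) \<ge> 1 powr (-2-\<alpha>)"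
          using a1 assms by (intro powr_mono2') (auto simp: power_le_one)
        hence "ennreal 1 * L0 \<le> ennreal ((a^n) powr (-2-\<alpha>)) * Pn \<alpha> f (Re (bn a b n))"
          unfolding L0_def by (intro mult_mono lower_Pn Re_bn assms cn ennreal_leI) auto
        thus ?thesis unfolding ns_eq Lw_def by (intro mult_left_mono) auto
      qed
      hence "sqrt (enn2real Lw) \<le> N n" for n
        unfolding N_def' by (intro real_sqrt_le_mono enn2real_mono) (use ns_fin in auto)
      hence "ereal (sqrt (enn2real Lw)) \<le> liminf (\<lambda>n. ereal (N n))"
        by (intro Liminf_bounded always_eventually) auto
      moreover have "sqrt (enn2real Lw) > 0" using Lwpos by simp
      ultimately show False using li by (simp add: N_def T_def)
    qed
  qed
qed

end
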